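(* Let $a>0$, $c>0$, and consider the four-dimensional system in the variables $x,y,z,b$ $$\dot x=x(1-y+cx-axz),\qquad \dot y=y(-1+x),\qquad \dot z=z(-b+ax^2),\qquad \dot b=0,$$ considered for $b>0$. If $f=f(x,y,z,b)$ is a formal first integral of this system, then $f$ is an arbitrary formal power series in the variable $b$ alone.
   Context: A formal first integral of this system is a formal power series $f\in\mathbb{C}[[x,y,z,b]]$ annihilated by the vector field $x(1-y+cx-axz)\partial_x+y(-1+x)\partial_y+z(-b+ax^2)\partial_z$ (with $\dot b=0$). *)

theory Defs
  imports Complex_Main
begin

text \<open>Formal power series in four variables x, y, z, b over the complex numbers,
  represented by their coefficient function: f (i,j,k,l) is the coefficient of
  x^i y^j z^k b^l.\<close>

type_synonym mps4 = "nat \<times> nat \<times> nat \<times> nat \<Rightarrow> complex"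

definition mps_const :: "complex \<Rightarrow> mps4" where
  "mps_const c = (\<lambda>(i,j,k,l). if i = 0 \<and> j = 0 \<and> k = 0 \<and> l = 0 then c else 0)"

definition mps_X :: mps4 where
  "mps_X = (\<lambda>(i,j,k,l). if i = 1 \<and> j = 0 \<and> k = 0 \<and> l = 0 then 1 else 0)"

definition mps_Y :: mps4 where
  "mps_Y = (\<lambda>(i,j,k,l). if i = 0 \<and> j = 1 \<and> k = 0 \<and> l = 0 then 1 else 0)"

definition mps_Z :: mps4 where
  "mps_Z = (\<lambda>(i,j,k,l). if i = 0 \<and> j = 0 \<and> k = 1 \<and> l = 0 then 1 else 0)"

definition mps_B :: mps4 where
  "mps_B = (\<lambda>(i,j,k,l). if i = 0 \<and> j = 0 \<and> k = 0 \<and> l = 1 then 1 else 0)"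

definition mps_add :: "mps4 \<Rightarrow> mps4 \<Rightarrow> mps4" where
  "mps_add f g = (\<lambda>n. f n + g n)"

definition mps_smult :: "complex \<Rightarrow> mps4 \<Rightarrow> mps4" where
  "mps_smult c f = (\<lambda>n. c * f n)"

definition mps_mult :: "mps4 \<Rightarrow> mps4 \<Rightarrow> mps4" where
  "mps_mult f g = (\<lambda>(i,j,k,l).
     \<Sum>i'\<le>i. \<Sum>j'\<le>j. \<Sum>k'\<le>k. \<Sum>l'\<le>l.
       f (i',j',k',l') * g (i - i', j - j', k - k', l - l'))"

definition mps_dx :: "mps4 \<Rightarrow> mps4" where
  "mps_dx f = (\<lambda>(i,j,k,l). of_nat (i + 1) * f (i + 1, j, k, l))"

definition mps_dy :: "mps4 \<Rightarrow> mps4" where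
  "mps_dy f = (\<lambda>(i,j,k,l). of_nat (j + 1) * f (i, j + 1, k, l))"

definition mps_dz :: "mps4 \<Rightarrow> mps4" where
  "mps_dz f = (\<lambda>(i,j,k,l). of_nat (k + 1) * f (i, j, k + 1, l))"

definition vf_apply :: "complex \<Rightarrow> complex \<Rightarrow> mps4 \<Rightarrow> mps4" where
  "vf_apply a c f =
     mps_add
       (mps_add
         (mps_mult
            (mps_mult mps_X
               (mps_add (mps_add (mps_add (mps_const 1) (mps_smult (-1) mps_Y))
                                 (mps_smult c mps_X))
                        (mps_smult (- a) (mps_mult mps_X mps_Z))))
            (mps_dx f))
         (mps_mult (mps_mult mps_Y (mps_add (mps_const (-1)) mps_X)) (mps_dy f)))
       (mps_mult (mps_mult mps_Z (mps_add (mps_smult (-1) mps_B)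
                                          (mps_smult a (mps_mult mps_X mps_X))))
                 (mps_dz f))"

definition formal_first_integral :: "complex \<Rightarrow> complex \<Rightarrow> mps4 \<Rightarrow> bool" where
  "formal_first_integral a c f \<longleftrightarrow> vf_apply a c f = (\<lambda>_. 0)"

definition series_in_b_only :: "mps4 \<Rightarrow> bool" where
  "series_in_b_only f \<longleftrightarrow> (\<forall>i j k l. (i \<noteq> 0 \<or> j \<noteq> 0 \<or> k \<noteq> 0) \<longrightarrow> f (i,j,k,l) = 0)"

end

theory Submission
  imports Defs
begin

definition mono :: "nat \<Rightarrow> nat \<Rightarrow> nat \<Rightarrow> nat \<Rightarrow> mps4" where
  "mono p q r s = (\<lambda>(i,j,k,l). if i = p \<and> j = q \<and> k = r \<and> l = s then 1 else 0)"

lemma sum_delta_le: "(\<Sum>x\<le>(n::nat). if x = p then h x else 0) = (if p \<le> n then (h p::complex) else 0)"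
  by simp

lemma if_mult_01: "(if P then 1 else 0) * (x::complex) = (if P then x else 0)" by simp
lemma if_conj_split: "(if A \<and> B then (x::complex) else 0) = (if A then (if B then x else 0) else 0)" by simp
lemma nat3cases: "(i=0 \<Longrightarrow> P) \<Longrightarrow> (i=1 \<Longrightarrow> P) \<Longrightarrow> (\<And>m. i = Suc(Suc m) \<Longrightarrow> P) \<Longrightarrow> P"
  by (metis One_nat_def not0_implies_Suc)

lemma if_mult_4: "(if A \<and> B \<and> C \<and> D then 1 else 0) * (x::complex) = (if A then if B then if C then if D then x else 0 else 0 else 0 else 0)" by simp

lemma sum_if_const: "(\<Sum>x\<le>(n::nat). if P then f x else 0) = (if P then (\<Sum>x\<le>n. f x) else (0::complex))" by simp

lemma mult_mono_left:
  "mps_mult (mono p q r s) g (i,j,k,l) =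
    (if p \<le> i \<and> q \<le> j \<and> r \<le> k \<and> s \<le> l then g (i-p,j-q,k-r,l-s) else 0)"
proof -
  have "mps_mult (mono p q r s) g (i,j,k,l) =
     (\<Sum>i'\<le>i. \<Sum>j'\<le>j. \<Sum>k'\<le>k. \<Sum>l'\<le>l.
       (if i' = p then (if j' = q then (if k' = r then (if l' = s then g (i - i', j - j', k - k', l - l') else 0) else 0) else 0) else 0))"
    unfolding mps_mult_def mono_def by (simp only: prod.case if_mult_4)
  also have "\<dots> = (if p \<le> i \<and> q \<le> j \<and> r \<le> k \<and> s \<le> l then g (i-p,j-q,k-r,l-s) else 0)"
    by (simp only: sum_if_const sum_delta_le) auto
  finally show ?thesis .
qed

lemma mult_add_left: "mps_mult (mps_add f g) h = mps_add (mps_mult f h) (mps_mult g h)"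
  unfolding mps_mult_def mps_add_def by (auto simp: algebra_simps sum.distrib)
lemma mult_add_right: "mps_mult h (mps_add f g) = mps_add (mps_mult h f) (mps_mult h g)"
  unfolding mps_mult_def mps_add_def by (auto simp: algebra_simps sum.distrib)
lemma mult_smult_left: "mps_mult (mps_smult c f) h = mps_smult c (mps_mult f h)"
  unfolding mps_mult_def mps_smult_def by (auto simp: algebra_simps sum_distrib_left)
lemma mult_smult_right: "mps_mult h (mps_smult c f) = mps_smult c (mps_mult h f)"
  unfolding mps_mult_def mps_smult_def by (auto simp: algebra_simps sum_distrib_left)
lemma mult_mono_mono: "mps_mult (mono p q r s) (mono p' q' r' s') = mono (p+p') (q+q') (r+r') (s+s')"
  by (rule ext, clarify, simp add: mult_mono_left, auto simp: mono_def)

lemma X_mono: "mps_X = mono 1 0 0 0" unfolding mps_X_def mono_def by simp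
lemma Y_mono: "mps_Y = mono 0 1 0 0" unfolding mps_Y_def mono_def by simp
lemma Z_mono: "mps_Z = mono 0 0 1 0" unfolding mps_Z_def mono_def by simp
lemma B_mono: "mps_B = mono 0 0 0 1" unfolding mps_B_def mono_def by simp
lemma const_mono: "mps_const c = mps_smult c (mono 0 0 0 0)"
  unfolding mps_const_def mps_smult_def mono_def by auto

lemma coef:
  "vf_apply a c f (i,j,k,l) =
     (of_nat i - of_nat j) * f (i,j,k,l)
   - (if j > 0 then of_nat i * f (i,j-1,k,l) else 0)
   + (if i > 0 then (c * of_nat (i-1) + of_nat j) * f (i-1,j,k,l) else 0)
   - (if i > 0 \<and> k > 0 then a * of_nat (i-1) * f (i-1,j,k-1,l) else 0)
   + (if i > 1 then a * of_nat k * f (i-2,j,k,l) else 0)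
   - (if l > 0 then of_nat k * f (i,j,k,l-1) else 0)"
  unfolding vf_apply_def X_mono Y_mono Z_mono B_mono const_mono
  apply (simp only: mult_add_left mult_add_right mult_smult_left mult_smult_right mult_mono_mono)
  apply (simp add: mps_add_def mps_smult_def mult_mono_left mps_dx_def mps_dy_def mps_dz_def)
  apply (rule nat3cases[of i]; cases j; cases k; cases l)
  apply (simp_all add: algebra_simps)
  done

lemma main_dir:
  fixes a c :: complex and f :: mps4
  assumes c0: "c \<noteq> 0" and E: "\<And>i j k l. vf_apply a c f (i,j,k,l) = 0"
  shows "\<forall>i j k l. i+j+k+l = n \<longrightarrow> (i\<noteq>0 \<or> j\<noteq>0 \<or> k\<noteq>0) \<longrightarrow> f(i,j,k,l) = 0"
proof (induction n rule: less_induct)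
  case (less n)
  have IH: "f(i,j,k,l) = 0" if "i+j+k+l < n" "i\<noteq>0 \<or> j\<noteq>0 \<or> k\<noteq>0" for i j k l
    using less that by blast
  have unb: "f(i,j,k,l) = 0" if deg: "i+j+k+l = n" and ij: "i \<noteq> j" for i j k l
  proof -
    have h1: "(if j > 0 then of_nat i * f (i,j-1,k,l) else 0) = 0"
      using IH[of i "j-1" k l] deg by (cases "i = 0") auto
    have h2: "(if i > 0 then (c * of_nat (i-1) + of_nat j) * f (i-1,j,k,l) else 0) = 0"
      using IH[of "i-1" j k l] deg by (cases "i = 1 \<and> j = 0 \<and> k = 0") auto
    have h3: "(if i > 0 \<and> k > 0 then a * of_nat (i-1) * f (i-1,j,k-1,l) else 0) = 0"
      using IH[of "i-1" j "k-1" l] deg by (cases "i = 1") auto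
    have h4: "(if i > 1 then a * of_nat k * f (i-2,j,k,l) else 0) = 0"
      using IH[of "i-2" j k l] deg by (cases "k = 0") auto
    have h5: "(if l > 0 then of_nat k * f (i,j,k,l-1) else 0) = 0"
      using IH[of i j k "l-1"] deg by (cases "k = 0") auto
    have "(of_nat i - of_nat j) * f (i,j,k,l) = 0"
      using E[of i j k l] h1 h2 h3 h4 h5 unfolding coef by simp
    moreover have "(of_nat i - of_nat j :: complex) \<noteq> 0" using ij by simp
    ultimately show ?thesis by simp
  qed
  show ?case
  proof (intro allI impI)
    fix i j k l assume deg: "i+j+k+l = n" and nz: "i\<noteq>0 \<or> j\<noteq>0 \<or> k\<noteq>0"
    show "f(i,j,k,l) = 0"
    proof (cases "i = j")
      case False then show ?thesis using unb deg by blast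
    next
      case True
      show ?thesis
      proof (cases "k = 0")
        case False
        have h1: "(if j > 0 then of_nat j * f (j,j-1,k,l+1) else 0) = 0"
          using unb[of j "j-1" k "l+1"] deg True by (cases "j = 0") auto
        have h2: "(if j > 0 then (c * of_nat (j-1) + of_nat j) * f (j-1,j,k,l+1) else 0) = 0"
          using unb[of "j-1" j k "l+1"] deg True by (cases "j = 0") auto
        have h3: "(if j > 0 \<and> k > 0 then a * of_nat (j-1) * f (j-1,j,k-1,l+1) else 0) = 0"
          using IH[of "j-1" j "k-1" "l+1"] deg True False by (cases "j = 1") auto
        have h4: "(if j > 1 then a * of_nat k * f (j-2,j,k,l+1) else 0) = 0"
          using IH[of "j-2" j k "l+1"] deg True False by auto
        have "of_nat k * f (j,j,k,l) = 0"
          using E[of j j k "l+1"] h1 h2 h3 h4 unfolding coef by simp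
        then show ?thesis using False True by simp
      next
        case k0: True
        with nz True have j0: "j > 0" by auto
        have u1: "f (j+1,j-1,0,l) = 0" using unb[of "j+1" "j-1" 0 l] deg True k0 j0 by auto
        have u2: "f (j-1,j+1,0,l) = 0" using unb[of "j-1" "j+1" 0 l] deg True k0 j0 by auto
        have e1: "f (j+1,j,0,l) + (c * of_nat j + of_nat j) * f (j,j,0,l) = 0"
          using E[of "j+1" j 0 l] u1 j0 unfolding coef by simp
        have e2: "- f (j,j+1,0,l) - of_nat j * f (j,j,0,l) = 0"
          using E[of j "j+1" 0 l] u2 j0 unfolding coef by (simp split: if_splits)
        have e3: "- (of_nat j + 1) * f (j+1,j,0,l) + (c * of_nat j + of_nat j + 1) * f (j,j+1,0,l) = 0"
          using E[of "j+1" "j+1" 0 l] unfolding coef by (simp add: algebra_simps split: if_splits)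
        have "of_nat j * c * f (j,j,0,l) = 0"
        proof -
          have A: "f (j+1,j,0,l) = - (c * of_nat j + of_nat j) * f (j,j,0,l)" using e1
            by (simp add: algebra_simps eq_neg_iff_add_eq_0)
          have B: "f (j,j+1,0,l) = - of_nat j * f (j,j,0,l)" using e2
            by (simp add: algebra_simps eq_neg_iff_add_eq_0) (metis add.right_inverse)
          show ?thesis using e3 unfolding A B by (simp add: algebra_simps)
        qed
        then show ?thesis using c0 j0 True k0 by simp
      qed
    qed
  qed
qed

lemma conv_dir:
  assumes "series_in_b_only f"
  shows "vf_apply a c f (i,j,k,l) = 0"
  using assms unfolding coef series_in_b_only_def
  by (cases "i = 0"; cases "j = 0"; cases "k = 0") (auto simp: less_Suc_eq)

theorem theorem1p7:
  fixes a c :: real and f :: mps4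
  assumes "a > 0" and "c > 0"
  shows "formal_first_integral (complex_of_real a) (complex_of_real c) f
         \<longleftrightarrow> series_in_b_only f"
proof
  assume h: "formal_first_integral (complex_of_real a) (complex_of_real c) f"
  have c0: "complex_of_real c \<noteq> 0" using assms by simp
  have E: "\<And>i j k l. vf_apply (complex_of_real a) (complex_of_real c) f (i,j,k,l) = 0"
    using h unfolding formal_first_integral_def by simp
  show "series_in_b_only f" unfolding series_in_b_only_def
    using main_dir[OF c0 E] by blast
next
  assume "series_in_b_only f"
  then show "formal_first_integral (complex_of_real a) (complex_of_real c) f"
    unfolding formal_first_integral_def using conv_dir by (intro ext) (metis prod_cases4)
qed

end
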